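(* Let $(M,d)$ be a pointed metric space and let $\mu\in ba(\widetilde M)$ be positive. The following are equivalent: (i) $\|\Phi^*\mu\|=\|\mu\|$. (ii) For every $\gamma\in(0,1)$ there exist $A\subseteq\widetilde M$ and $f\in B_{\mathrm{Lip}_0(M)}$ with $\mu(A)\ge\gamma\mu(\widetilde M)$ and $f(m_{x,y})\ge\gamma$ for all $(x,y)\in A$. (iii) For every $\gamma\in(0,1)$ there exists a $\gamma$-cyclically monotonic $A\subseteq\widetilde M$ with $\mu(A)\ge\gamma\mu(\widetilde M)$.
   Context: $(M,d)$ is a metric space with base point $0$; $\mathrm{Lip}_0(M)$ is the real Banach space of Lipschitz $f\colon M\to\mathbb R$ with $f(0)=0$, normed by the best Lipschitz constant, with closed unit ball $B_{\mathrm{Lip}_0(M)}$. $\widetilde M=\{(x,y)\in M\times M:x\ne y\}$ and $f(m_{x,y})=(f(x)-f(y))/d(x,y)$. $ba(\widetilde M)$ is the Banach space of bounded finitely additive signed measures on the power set of $\widetilde M$ with norm $|\mu|(\widetilde M)$. $\Phi\colon\mathrm{Lip}_0(M)\to\ell_\infty(\widetilde M)$, $\Phi f(x,y)=(f(x)-f(y))/d(x,y)$, and $(\Phi^*\mu)(f)=\int_{\widetilde M}\Phi f\,d\mu$. For $\gamma\in(0,1]$, $A\subseteq\widetilde M$ is $\gamma$-cyclically monotonic if for every finite sequence $(x_1,y_1),\dots,(x_n,y_n)\in A$, with $y_{n+1}=y_1$, $\sum_{i=1}^n\min\{d(x_i,y_{i+1})-\gamma d(x_i,y_i),\,d(y_i,y_{i+1})\}\ge0$.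 *)

theory Defs
  imports "HOL-Analysis.Analysis" "HOL-Library.Disjoint_Sets"
begin

definition Mtilde :: "'a set \<Rightarrow> ('a \<times> 'a) set" where
  "Mtilde M = {(x, y). x \<in> M \<and> y \<in> M \<and> x \<noteq> y}"

text \<open>Closed unit ball of Lip_0(M) for a metric d on M with base point z
  (only values on M matter).\<close>
definition lip0_ball :: "'a set \<Rightarrow> ('a \<Rightarrow> 'a \<Rightarrow> real) \<Rightarrow> 'a \<Rightarrow> ('a \<Rightarrow> real) set" where
  "lip0_ball M d z = {f. f z = 0 \<and> (\<forall>x\<in>M. \<forall>y\<in>M. \<bar>f x - f y\<bar> \<le> d x y)}"

definition Phi :: "('a \<Rightarrow> 'a \<Rightarrow> real) \<Rightarrow> ('a \<Rightarrow> real) \<Rightarrow> 'a \<times> 'a \<Rightarrow> real" where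
  "Phi d f = (\<lambda>(x, y). (f x - f y) / d x y)"

text \<open>Positive element of ba(T): a nonnegative finitely additive set function on
  the power set of T (positivity implies boundedness by mu T).\<close>
definition positive_ba :: "'b set \<Rightarrow> ('b set \<Rightarrow> real) \<Rightarrow> bool" where
  "positive_ba T \<mu> \<longleftrightarrow>
     (\<forall>A. A \<subseteq> T \<longrightarrow> 0 \<le> \<mu> A) \<and>
     (\<forall>A B. A \<subseteq> T \<longrightarrow> B \<subseteq> T \<longrightarrow> A \<inter> B = {} \<longrightarrow> \<mu> (A \<union> B) = \<mu> A + \<mu> B)"

text \<open>Integral of a bounded function g against a positive finitely additive
  measure on the power set of T (lower Darboux sums over finite partitions;
  for bounded g this coincides with the standard integral).\<close>
definition fa_integral :: "'b set \<Rightarrow> ('b set \<Rightarrow> real) \<Rightarrow> ('b \<Rightarrow> real) \<Rightarrow> real" where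
  "fa_integral T \<mu> g =
     Sup {(\<Sum>A\<in>P. Inf (g ` A) * \<mu> A) | P. finite P \<and> partition_on T P}"

definition Phi_star_norm :: "'a set \<Rightarrow> ('a \<Rightarrow> 'a \<Rightarrow> real) \<Rightarrow> 'a \<Rightarrow> (('a \<times> 'a) set \<Rightarrow> real) \<Rightarrow> real" where
  "Phi_star_norm M d z \<mu> =
     Sup {\<bar>fa_integral (Mtilde M) \<mu> (Phi d f)\<bar> | f. f \<in> lip0_ball M d z}"

definition cyc_mono :: "('a \<Rightarrow> 'a \<Rightarrow> real) \<Rightarrow> real \<Rightarrow> ('a \<times> 'a) set \<Rightarrow> bool" where
  "cyc_mono d \<gamma> A \<longleftrightarrow>
     (\<forall>(n::nat) (x::nat \<Rightarrow> 'a) (y::nat \<Rightarrow> 'a). n \<ge> 1 \<longrightarrow> (\<forall>i<n. (x i, y i) \<in> A) \<longrightarrow>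
        0 \<le> (\<Sum>i<n. min (d (x i) (y ((i + 1) mod n)) - \<gamma> * d (x i) (y i))
                        (d (y i) (y ((i + 1) mod n)))))"

end

theory Submission
  imports Defs
begin


lemma pb_empty: "positive_ba T \<mu> \<Longrightarrow> \<mu> {} = 0"
proof -
  assume "positive_ba T \<mu>"
  then have "\<mu> ({} \<union> {}) = \<mu> {} + \<mu> {}" unfolding positive_ba_def by blast
  then show ?thesis by simp
qed

lemma pb_nonneg: "positive_ba T \<mu> \<Longrightarrow> A \<subseteq> T \<Longrightarrow> 0 \<le> \<mu> A"
  unfolding positive_ba_def by blast

lemma pb_diff: "positive_ba T \<mu> \<Longrightarrow> A \<subseteq> T \<Longrightarrow> \<mu> (T - A) = \<mu> T - \<mu> A"
proof -
  assume p: "positive_ba T \<mu>" and A: "A \<subseteq> T"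
  have "\<mu> (A \<union> (T - A)) = \<mu> A + \<mu> (T - A)"
    using p A unfolding positive_ba_def by blast
  moreover have "A \<union> (T - A) = T" using A by blast
  ultimately show ?thesis by simp
qed

lemma pb_sum:
  assumes p: "positive_ba T \<mu>" and "finite P" and "disjoint P" and "\<forall>B\<in>P. B \<subseteq> T" and C: "C \<subseteq> T"
  shows "(\<Sum>B\<in>P. \<mu> (B \<inter> C)) = \<mu> (\<Union>P \<inter> C)"
  using assms(2,3,4)
proof (induction P rule: finite_induct)
  case empty
  then show ?case using pb_empty[OF p] by simp
next
  case (insert B P)
  have dP: "disjoint P" using insert.prems(1) by (simp add: pairwise_insert)
  have sP: "\<forall>B\<in>P. B \<subseteq> T" using insert.prems(2) by simp
  have IH: "(\<Sum>B\<in>P. \<mu> (B \<inter> C)) = \<mu> (\<Union>P \<inter> C)" using insert.IH[OF dP sP] .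
  have disB: "B \<inter> B' = {}" if B': "B' \<in> P" for B'
  proof -
    have "B' \<noteq> B" using insert.hyps(2) B' by auto
    moreover have "B \<in> insert B P" "B' \<in> insert B P" using B' by auto
    ultimately show ?thesis using insert.prems(1) unfolding disjoint_def by metis
  qed
  have dis: "(B \<inter> C) \<inter> (\<Union>P \<inter> C) = {}" using disB by blast
  have add: "\<forall>A B. A \<subseteq> T \<longrightarrow> B \<subseteq> T \<longrightarrow> A \<inter> B = {} \<longrightarrow> \<mu> (A \<union> B) = \<mu> A + \<mu> B"
    using p unfolding positive_ba_def by (rule conjunct2)
  have s1: "B \<inter> C \<subseteq> T" "\<Union>P \<inter> C \<subseteq> T" using C by auto
  have "\<mu> ((B \<inter> C) \<union> (\<Union>P \<inter> C)) = \<mu> (B \<inter> C) + \<mu> (\<Union>P \<inter> C)"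
    using add s1 dis by blast
  moreover have "\<Union>(insert B P) \<inter> C = (B \<inter> C) \<union> (\<Union>P \<inter> C)" by blast
  ultimately show ?case using insert.hyps IH by simp
qed

lemma ls_bounds:
  assumes p: "positive_ba T \<mu>" and g: "\<forall>q\<in>T. \<bar>g q\<bar> \<le> (1::real)"
    and P: "finite P" "partition_on T P"
  shows "(\<Sum>A\<in>P. Inf (g ` A) * \<mu> A) \<le> \<mu> T \<and> - \<mu> T \<le> (\<Sum>A\<in>P. Inf (g ` A) * \<mu> A)"
proof -
  have sub: "\<forall>B\<in>P. B \<subseteq> T" and ne: "\<forall>B\<in>P. B \<noteq> {}" and dj: "disjoint P" and un: "\<Union>P = T"
    using P(2) unfolding partition_on_def by auto
  have sumeq: "(\<Sum>B\<in>P. \<mu> B) = \<mu> T"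
    using pb_sum[OF p P(1) dj sub, of T] un sub by (simp add: Int_absorb2)
  have each: "Inf (g ` B) * \<mu> B \<le> \<mu> B \<and> - \<mu> B \<le> Inf (g ` B) * \<mu> B" if B: "B \<in> P" for B
  proof -
    obtain q where q: "q \<in> B" using ne B by blast
    have bb: "bdd_below (g ` B)" using g sub B by (intro bdd_belowI[of _ "-1"]) force
    have "Inf (g ` B) \<le> g q" using bb q by (simp add: cInf_lower)
    also have "\<dots> \<le> 1" using g sub B q by force
    finally have u: "Inf (g ` B) \<le> 1" .
    have l: "-1 \<le> Inf (g ` B)" using g sub B q
      by (intro cInf_greatest) (auto, force)
    have m: "0 \<le> \<mu> B" using pb_nonneg[OF p] sub B by blast
    have "Inf (g ` B) * \<mu> B \<le> 1 * \<mu> B" using u m by (rule mult_right_mono)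
    moreover have "(-1) * \<mu> B \<le> Inf (g ` B) * \<mu> B" using l m by (rule mult_right_mono)
    ultimately show ?thesis by simp
  qed
  have "(\<Sum>A\<in>P. Inf (g ` A) * \<mu> A) \<le> (\<Sum>A\<in>P. \<mu> A)" using each by (intro sum_mono) auto
  moreover have "(\<Sum>A\<in>P. - \<mu> A) \<le> (\<Sum>A\<in>P. Inf (g ` A) * \<mu> A)" using each by (intro sum_mono) auto
  ultimately show ?thesis using sumeq by (simp add: sum_negf)
qed



lemma fa_set_props:
  assumes p: "positive_ba T \<mu>" and g: "\<forall>q\<in>T. \<bar>g q\<bar> \<le> (1::real)"
  defines "S \<equiv> {(\<Sum>A\<in>P. Inf (g ` A) * \<mu> A) | P. finite P \<and> partition_on T P}"
  shows "S \<noteq> {}" "bdd_above S" "\<forall>s\<in>S. s \<le> \<mu> T \<and> - \<mu> T \<le> s"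
proof -
  have "partition_on T ({T} - {{}})" by (rule partition_onI) (auto simp: disjnt_def)
  moreover have "finite ({T} - {{}})" by simp
  ultimately have "(\<Sum>A\<in>({T} - {{}}). Inf (g ` A) * \<mu> A) \<in> S" unfolding S_def by blast
  then show "S \<noteq> {}" by blast
  show b: "\<forall>s\<in>S. s \<le> \<mu> T \<and> - \<mu> T \<le> s"
  proof
    fix s assume "s \<in> S"
    then obtain P where "finite P" "partition_on T P" "s = (\<Sum>A\<in>P. Inf (g ` A) * \<mu> A)"
      unfolding S_def by blast
    then show "s \<le> \<mu> T \<and> - \<mu> T \<le> s" using ls_bounds[OF p g] by simp
  qed
  then show "bdd_above S" by (intro bdd_aboveI[of _ "\<mu> T"]) blast
qed

lemma fa_bounds:
  assumes p: "positive_ba T \<mu>" and g: "\<forall>q\<in>T. \<bar>g q\<bar> \<le> (1::real)"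
  shows "fa_integral T \<mu> g \<le> \<mu> T" "- \<mu> T \<le> fa_integral T \<mu> g"
proof -
  note S = fa_set_props[OF p g]
  show "fa_integral T \<mu> g \<le> \<mu> T" unfolding fa_integral_def
    using S by (intro cSup_least) auto
  obtain s where s: "s \<in> {(\<Sum>A\<in>P. Inf (g ` A) * \<mu> A) | P. finite P \<and> partition_on T P}"
    using S(1) by blast
  have "- \<mu> T \<le> s" using S(3) s by blast
  also have "s \<le> fa_integral T \<mu> g" unfolding fa_integral_def using S(2) s by (rule cSup_upper[rotated])
  finally show "- \<mu> T \<le> fa_integral T \<mu> g" .
qed

lemma fa_upper_level:
  assumes p: "positive_ba T \<mu>" and g: "\<forall>q\<in>T. \<bar>g q\<bar> \<le> (1::real)"
    and ga: "0 \<le> \<gamma>" "\<gamma> < 1"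
  shows "fa_integral T \<mu> g \<le> \<gamma> * \<mu> T + (1 - \<gamma>) * \<mu> {q\<in>T. \<gamma> \<le> g q}"
proof -
  define A where "A = {q\<in>T. \<gamma> \<le> g q}"
  have AT: "A \<subseteq> T" unfolding A_def by blast
  note S = fa_set_props[OF p g]
  have "s \<le> \<gamma> * \<mu> T + (1 - \<gamma>) * \<mu> A"
    if H: "s \<in> {(\<Sum>A\<in>P. Inf (g ` A) * \<mu> A) | P. finite P \<and> partition_on T P}" for s
  proof -
    obtain P where P: "finite P" "partition_on T P" and s: "s = (\<Sum>A\<in>P. Inf (g ` A) * \<mu> A)"
      using H by blast
    have sub: "\<forall>B\<in>P. B \<subseteq> T" and ne: "\<forall>B\<in>P. B \<noteq> {}" and dj: "disjoint P" and un: "\<Union>P = T"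
      using P(2) unfolding partition_on_def by auto
    have each: "Inf (g ` B) * \<mu> B \<le> \<gamma> * \<mu> (B \<inter> T) + (1 - \<gamma>) * \<mu> (B \<inter> A)" if B: "B \<in> P" for B
    proof -
      have bb: "bdd_below (g ` B)"
      proof (rule bdd_belowI[of _ "-1"])
        fix v assume "v \<in> g ` B"
        then obtain q where "q \<in> B" "v = g q" by blast
        then have "\<bar>g q\<bar> \<le> 1" using g sub B by blast
        then show "-1 \<le> v" using \<open>v = g q\<close> by linarith
      qed
      have m: "0 \<le> \<mu> B" using pb_nonneg[OF p] sub B by blast
      have BT: "B \<inter> T = B" using sub B by blast
      show ?thesis
      proof (cases "B \<subseteq> A")
        case True
        obtain q where q: "q \<in> B" using ne B by blast
        have "Inf (g ` B) \<le> g q" using bb q by (simp add: cInf_lower)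
        also have "\<dots> \<le> 1"
        proof -
          have "\<bar>g q\<bar> \<le> 1" using g sub B q by blast
          then show ?thesis by linarith
        qed
        finally have "Inf (g ` B) * \<mu> B \<le> 1 * \<mu> B" using m by (rule mult_right_mono)
        moreover have "B \<inter> A = B" using True by blast
        ultimately have "Inf (g ` B) * \<mu> B \<le> \<gamma> * \<mu> B + (1 - \<gamma>) * \<mu> B" by (simp add: algebra_simps)
        then show ?thesis using BT \<open>B \<inter> A = B\<close> by simp
      next
        case False
        then obtain q where q0: "q \<in> B" "q \<notin> A" by blast
        have q: "q \<in> B" "g q < \<gamma>" using q0 sub B unfolding A_def by auto
        have "Inf (g ` B) \<le> g q" using bb q by (simp add: cInf_lower)
        then have "Inf (g ` B) \<le> \<gamma>" using q by simp
        then have "Inf (g ` B) * \<mu> B \<le> \<gamma> * \<mu> B" using m by (rule mult_right_mono)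
        moreover have "0 \<le> (1 - \<gamma>) * \<mu> (B \<inter> A)"
        proof -
          have "0 \<le> \<mu> (B \<inter> A)" using pb_nonneg[OF p, of "B \<inter> A"] AT by blast
          then show ?thesis using ga by simp
        qed
        ultimately have "Inf (g ` B) * \<mu> B \<le> \<gamma> * \<mu> B + (1 - \<gamma>) * \<mu> (B \<inter> A)" by linarith
        then show ?thesis using BT by simp
      qed
    qed
    have "s \<le> (\<Sum>B\<in>P. \<gamma> * \<mu> (B \<inter> T) + (1 - \<gamma>) * \<mu> (B \<inter> A))"
      unfolding s using each by (intro sum_mono) auto
    also have "\<dots> = \<gamma> * (\<Sum>B\<in>P. \<mu> (B \<inter> T)) + (1 - \<gamma>) * (\<Sum>B\<in>P. \<mu> (B \<inter> A))"
      by (simp add: sum.distrib sum_distrib_left)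
    also have "\<dots> = \<gamma> * \<mu> T + (1 - \<gamma>) * \<mu> A"
      using pb_sum[OF p P(1) dj sub, of T] pb_sum[OF p P(1) dj sub AT] un AT by (simp add: Int_absorb1)
    finally show ?thesis .
  qed
  then have "Sup {(\<Sum>A\<in>P. Inf (g ` A) * \<mu> A) | P. finite P \<and> partition_on T P} \<le> \<gamma> * \<mu> T + (1 - \<gamma>) * \<mu> A"
    by (intro cSup_least[OF S(1)])
  then show ?thesis unfolding fa_integral_def A_def by simp
qed

lemma fa_lower_two:
  assumes p: "positive_ba T \<mu>" and g: "\<forall>q\<in>T. \<bar>g q\<bar> \<le> (1::real)"
    and AT: "A \<subseteq> T" and a: "\<forall>q\<in>A. a \<le> g q" and b: "\<forall>q\<in>T - A. b \<le> g q"
  shows "a * \<mu> A + b * \<mu> (T - A) \<le> fa_integral T \<mu> g"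
proof -
  define P where "P = {A, T - A} - {{}}"
  have P: "finite P" "partition_on T P" unfolding P_def partition_on_def disjoint_def using AT by auto
  have sub: "\<forall>B\<in>P. B \<subseteq> T" and dj: "disjoint P" and un: "\<Union>P = T"
    using P(2) unfolding partition_on_def by auto
  note S = fa_set_props[OF p g]
  have each: "a * \<mu> (B \<inter> A) + b * \<mu> (B \<inter> (T - A)) \<le> Inf (g ` B) * \<mu> B" if B: "B \<in> P" for B
  proof -
    have m: "0 \<le> \<mu> B" using pb_nonneg[OF p] sub B by blast
    have ne: "B \<noteq> {}" using B unfolding P_def by blast
    have e0: "\<mu> {} = 0" using pb_empty[OF p] .
    show ?thesis
    proof (cases "B = A")
      case True
      have "a \<le> Inf (g ` B)" using a ne True by (intro cInf_greatest) auto
      then have "a * \<mu> B \<le> Inf (g ` B) * \<mu> B" using m by (rule mult_right_mono)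
      moreover have "B \<inter> (T - A) = {}" "B \<inter> A = B" using True by auto
      ultimately show ?thesis using e0 by simp
    next
      case False
      then have BA: "B = T - A" using B unfolding P_def by blast
      have "b \<le> Inf (g ` B)" using b ne BA by (intro cInf_greatest) auto
      then have "b * \<mu> B \<le> Inf (g ` B) * \<mu> B" using m by (rule mult_right_mono)
      moreover have "B \<inter> (T - A) = B" "B \<inter> A = {}" using BA by auto
      ultimately show ?thesis using e0 by simp
    qed
  qed
  have "a * \<mu> A + b * \<mu> (T - A) = a * (\<Sum>B\<in>P. \<mu> (B \<inter> A)) + b * (\<Sum>B\<in>P. \<mu> (B \<inter> (T - A)))"
    using pb_sum[OF p P(1) dj sub AT] pb_sum[OF p P(1) dj sub, of "T - A"] un AT
    by (simp add: Int_absorb1 Diff_subset)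
  also have "\<dots> = (\<Sum>B\<in>P. a * \<mu> (B \<inter> A) + b * \<mu> (B \<inter> (T - A)))"
    by (simp add: sum.distrib sum_distrib_left)
  also have "\<dots> \<le> (\<Sum>B\<in>P. Inf (g ` B) * \<mu> B)" using each by (intro sum_mono) auto
  also have "\<dots> \<le> fa_integral T \<mu> g" unfolding fa_integral_def
    using S(2) P by (intro cSup_upper) auto
  finally show ?thesis .
qed



lemma phi_bound:
  assumes ms: "Metric_space M d" and f: "f \<in> lip0_ball M d z" and q: "q \<in> Mtilde M"
  shows "\<bar>Phi d f q\<bar> \<le> 1"
proof -
  interpret Metric_space M d by fact
  obtain x y where q': "q = (x, y)" "x \<in> M" "y \<in> M" "x \<noteq> y" using q unfolding Mtilde_def by (cases q) blast
  have pos: "0 < d x y" using q' mdist_pos_less by blast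
  have "\<bar>f x - f y\<bar> \<le> d x y" using f q' unfolding lip0_ball_def by blast
  then have "\<bar>f x - f y\<bar> / d x y \<le> 1" using pos by (simp add: divide_le_eq_1)
  moreover have "Phi d f q = (f x - f y) / d x y" unfolding Phi_def q'(1) by simp
  ultimately show ?thesis using pos by (simp add: abs_divide)
qed


lemma ball_neg: "f \<in> lip0_ball M d z \<Longrightarrow> (\<lambda>x. - f x) \<in> lip0_ball M d z"
  unfolding lip0_ball_def by (auto simp: abs_minus_commute)

lemma phi_neg: "Phi d (\<lambda>x. - f x) q = - Phi d f q"
proof -
  obtain a b where q: "q = (a, b)" by (cases q)
  have "Phi d (\<lambda>x. - f x) q = (- f a - - f b) / d a b" unfolding Phi_def q by simp
  also have "- f a - - f b = - (f a - f b)" by simp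
  also have "- (f a - f b) / d a b = - ((f a - f b) / d a b)" by (rule divide_minus_left)
  also have "(f a - f b) / d a b = Phi d f q" unfolding Phi_def q by simp
  finally show ?thesis .
qed

lemma ball_zero: "(\<lambda>x. 0) \<in> lip0_ball M d z" if "Metric_space M d"
proof -
  interpret Metric_space M d by fact
  show ?thesis unfolding lip0_ball_def by simp
qed

lemma norm_props:
  fixes z :: 'a
  assumes ms: "Metric_space M d" and p: "positive_ba (Mtilde M) \<mu>"
  defines "Sn \<equiv> {\<bar>fa_integral (Mtilde M) \<mu> (Phi d f)\<bar> | f. f \<in> lip0_ball M d z}"
  shows "Sn \<noteq> {}" "bdd_above Sn" "Phi_star_norm M d z \<mu> \<le> \<mu> (Mtilde M)"
    "\<And>f. f \<in> lip0_ball M d z \<Longrightarrow> \<bar>fa_integral (Mtilde M) \<mu> (Phi d f)\<bar> \<le> Phi_star_norm M d z \<mu>"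
    "Phi_star_norm M d z \<mu> = Sup Sn"
proof -
  show "Sn \<noteq> {}" unfolding Sn_def using ball_zero[OF ms] by blast
  have b: "\<forall>s\<in>Sn. s \<le> \<mu> (Mtilde M)"
  proof
    fix s assume "s \<in> Sn"
    then obtain f where f: "f \<in> lip0_ball M d z" and s: "s = \<bar>fa_integral (Mtilde M) \<mu> (Phi d f)\<bar>"
      unfolding Sn_def by blast
    have "\<forall>q\<in>Mtilde M. \<bar>Phi d f q\<bar> \<le> 1" using phi_bound[OF ms f] by blast
    from fa_bounds[OF p this] show "s \<le> \<mu> (Mtilde M)" unfolding s by linarith
  qed
  then show "bdd_above Sn" by (meson bdd_aboveI)
  show eq: "Phi_star_norm M d z \<mu> = Sup Sn" unfolding Sn_def Phi_star_norm_def ..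
  show "Phi_star_norm M d z \<mu> \<le> \<mu> (Mtilde M)" unfolding eq using b \<open>Sn \<noteq> {}\<close>
    by (intro cSup_least) auto
  fix f assume "f \<in> lip0_ball M d z"
  then have "\<bar>fa_integral (Mtilde M) \<mu> (Phi d f)\<bar> \<in> Sn" unfolding Sn_def by blast
  then show "\<bar>fa_integral (Mtilde M) \<mu> (Phi d f)\<bar> \<le> Phi_star_norm M d z \<mu>"
    unfolding eq using \<open>bdd_above Sn\<close> by (intro cSup_upper)
qed

lemma sum_cyc_shift: "(\<Sum>i<Suc m. h ((i + 1) mod Suc m)) = (\<Sum>i<Suc m. (h i :: real))"
proof -
  have "(\<Sum>i<Suc m. h ((i + 1) mod Suc m)) = (\<Sum>i<m. h ((i + 1) mod Suc m)) + h 0"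
    by simp
  also have "(\<Sum>i<m. h ((i + 1) mod Suc m)) = (\<Sum>i<m. h (Suc i))"
    by (intro sum.cong) auto
  also have "(\<Sum>i<m. h (Suc i)) + h 0 = (\<Sum>i<Suc m. h i)"
    by (subst sum.lessThan_Suc_shift) (rule add.commute)
  finally show ?thesis .
qed

lemma ii_to_cm:
  assumes ms: "Metric_space M d" and f: "f \<in> lip0_ball M d z" and AT: "A \<subseteq> Mtilde M"
    and gA: "\<forall>(x, y)\<in>A. \<gamma> \<le> Phi d f (x, y)"
  shows "cyc_mono d \<gamma> A"
  unfolding cyc_mono_def
proof (intro allI impI)
  interpret Metric_space M d by fact
  fix n :: nat and x y :: "nat \<Rightarrow> 'a"
  assume n: "1 \<le> n" and xy: "\<forall>i<n. (x i, y i) \<in> A"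
  obtain m where m: "n = Suc m" using n by (cases n) auto
  have inM: "x i \<in> M" "y i \<in> M" "x i \<noteq> y i" if "i < n" for i
    using xy that AT unfolding Mtilde_def by auto
  have each: "f (y i) - f (y ((i + 1) mod n)) \<le>
      min (d (x i) (y ((i + 1) mod n)) - \<gamma> * d (x i) (y i)) (d (y i) (y ((i + 1) mod n)))"
    if i: "i < n" for i
  proof -
    define j where "j = (i + 1) mod n"
    have j: "j < n" unfolding j_def using n by simp
    have pos: "0 < d (x i) (y i)" using inM[OF i] mdist_pos_less by blast
    have "\<gamma> \<le> (f (x i) - f (y i)) / d (x i) (y i)" using gA xy i unfolding Phi_def by fastforce
    then have g1: "\<gamma> * d (x i) (y i) \<le> f (x i) - f (y i)" using pos by (simp add: le_divide_eq)
    have l1: "f (x i) - f (y j) \<le> d (x i) (y j)" using f inM[OF i] inM[OF j]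
      unfolding lip0_ball_def by fastforce
    have l2: "f (y i) - f (y j) \<le> d (y i) (y j)" using f inM[OF i] inM[OF j]
      unfolding lip0_ball_def by fastforce
    show ?thesis using g1 l1 l2 unfolding j_def[symmetric] by simp
  qed
  have "0 = (\<Sum>i<n. f (y i) - f (y ((i + 1) mod n)))"
    unfolding m sum_subtractf using sum_cyc_shift[of "\<lambda>i. f (y i)" m] by simp
  also have "\<dots> \<le> (\<Sum>i<n. min (d (x i) (y ((i + 1) mod n)) - \<gamma> * d (x i) (y i))
                        (d (y i) (y ((i + 1) mod n))))"
    using each by (intro sum_mono) auto
  finally show "0 \<le> (\<Sum>i<n. min (d (x i) (y ((i + 1) mod n)) - \<gamma> * d (x i) (y i))
                        (d (y i) (y ((i + 1) mod n))))" .
qed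




lemma cm_potential:
  fixes M :: "'a set" and d :: "'a \<Rightarrow> 'a \<Rightarrow> real" and z :: 'a
  assumes ms: "Metric_space M d" and zM: "z \<in> M" and AT: "A \<subseteq> Mtilde M" and cm: "cyc_mono d \<gamma> A"
  shows "\<exists>f\<in>lip0_ball M d z. \<forall>(x, y)\<in>A. \<gamma> \<le> Phi d f (x, y)"
proof -
  interpret Metric_space M d by fact
  have inA: "x \<in> M" "y \<in> M" "x \<noteq> y" if "(x, y) \<in> A" for x y
    using that AT unfolding Mtilde_def by auto
  define W where "W n x y p = d z (y 0) + (\<Sum>i<n. - (\<gamma> * d (x i) (y i)))
      + (\<Sum>i<n - 1. d (x i) (y (Suc i))) + d (x (n - 1)) p"
    for n :: nat and x y :: "nat \<Rightarrow> 'a" and p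
  define WS where "WS p = insert (d z p) {W n x y p | n x y. 1 \<le> n \<and> (\<forall>i<n. (x i, y i) \<in> A)}" for p
  define g where "g p = Inf (WS p)" for p
  have cases_WS: "w = d z p \<or> (\<exists>n x y. w = W n x y p \<and> 1 \<le> n \<and> (\<forall>i<n. (x i, y i) \<in> A))"
    if "w \<in> WS p" for w p
    using that unfolding WS_def by blast
  have memWS: "W n x y p \<in> WS p" if "1 \<le> n" "\<forall>i<n. (x i, y i) \<in> A" for n x y p
    using that unfolding WS_def by blast
  have xyM: "x i \<in> M \<and> y i \<in> M" if "\<forall>i<n. (x i, y i) \<in> A" "i < n" for x y :: "nat \<Rightarrow> 'a" and n i :: nat
  proof -
    have "(x i, y i) \<in> A" using that by blast
    then show ?thesis using inA by blast
  qed
  have cm': "0 \<le> (\<Sum>i<n. min (d (x i) (y ((i + 1) mod n)) - \<gamma> * d (x i) (y i)) (d (y i) (y ((i + 1) mod n))))"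
    if "1 \<le> n" "\<forall>i<n. (x i, y i) \<in> A" for n :: nat and x y :: "nat \<Rightarrow> 'a"
  proof -
    have "\<forall>(n::nat) (x::nat \<Rightarrow> 'a) (y::nat \<Rightarrow> 'a). 1 \<le> n \<longrightarrow> (\<forall>i<n. (x i, y i) \<in> A) \<longrightarrow>
        0 \<le> (\<Sum>i<n. min (d (x i) (y ((i + 1) mod n)) - \<gamma> * d (x i) (y i))
                        (d (y i) (y ((i + 1) mod n))))"
      using cm unfolding cyc_mono_def .
    then have "1 \<le> n \<longrightarrow> (\<forall>i<n. (x i, y i) \<in> A) \<longrightarrow>
        0 \<le> (\<Sum>i<n. min (d (x i) (y ((i + 1) mod n)) - \<gamma> * d (x i) (y i))
                        (d (y i) (y ((i + 1) mod n))))"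
      by blast
    then show ?thesis using that by blast
  qed
  have low: "- d p z \<le> w" if p: "p \<in> M" and w: "w \<in> WS p" for p w
  proof -
    from cases_WS[OF w] show ?thesis
    proof
      assume "w = d z p"
      then show ?thesis using nonneg[of p z] nonneg[of z p] by linarith
    next
      assume "\<exists>n x y. w = W n x y p \<and> 1 \<le> n \<and> (\<forall>i<n. (x i, y i) \<in> A)"
      then obtain n x y where w: "w = W n x y p" and n: "1 \<le> n" and xy: "\<forall>i<n. (x i, y i) \<in> A"
        by blast
      obtain m where m: "n = Suc m" using n by (cases n) auto
      have a: "x m \<in> M" "y 0 \<in> M" using xyM[OF xy, of m] xyM[OF xy, of 0] m by auto
      have t1: "d (x m) (y 0) \<le> d (x m) p + d p (y 0)" using triangle a p by blast
      have t2: "d p (y 0) \<le> d p z + d z (y 0)" using triangle a p zM by blast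
      have "(\<Sum>i<n. min (d (x i) (y ((i + 1) mod n)) - \<gamma> * d (x i) (y i)) (d (y i) (y ((i + 1) mod n))))
          \<le> (\<Sum>i<n. d (x i) (y ((i + 1) mod n)) - \<gamma> * d (x i) (y i))"
        by (intro sum_mono) simp
      also have "\<dots> = (\<Sum>i<n. d (x i) (y ((i + 1) mod n))) + (\<Sum>i<n. - (\<gamma> * d (x i) (y i)))"
        by (simp add: sum_subtractf sum_negf)
      also have "(\<Sum>i<n. d (x i) (y ((i + 1) mod n))) = (\<Sum>i<m. d (x i) (y (Suc i))) + d (x m) (y 0)"
      proof -
        have "(\<Sum>i<Suc m. d (x i) (y ((i + 1) mod Suc m)))
            = (\<Sum>i<m. d (x i) (y ((i + 1) mod Suc m))) + d (x m) (y ((m + 1) mod Suc m))"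
          by (rule sum.lessThan_Suc)
        also have "(\<Sum>i<m. d (x i) (y ((i + 1) mod Suc m))) = (\<Sum>i<m. d (x i) (y (Suc i)))"
          by (intro sum.cong) auto
        also have "(m + 1) mod Suc m = 0" by simp
        finally show ?thesis unfolding m .
      qed
      finally have "0 \<le> (\<Sum>i<m. d (x i) (y (Suc i))) + d (x m) (y 0) + (\<Sum>i<n. - (\<gamma> * d (x i) (y i)))"
        using cm'[OF n xy] by linarith
      moreover have "w = d z (y 0) + (\<Sum>i<n. - (\<gamma> * d (x i) (y i)))
          + (\<Sum>i<m. d (x i) (y (Suc i))) + d (x m) p"
        unfolding w W_def m by simp
      ultimately show ?thesis using t1 t2 by linarith
    qed
  qed
  have ne: "WS p \<noteq> {}" for p unfolding WS_def by blast
  have bb: "bdd_below (WS p)" if "p \<in> M" for p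
    by (rule bdd_belowI[of _ "- d p z"]) (rule low[OF that])
  have lipstep: "\<exists>w'\<in>WS q. w' \<le> w + d p q" if p: "p \<in> M" and q: "q \<in> M" and w: "w \<in> WS p" for p q w
  proof -
    from cases_WS[OF w] show ?thesis
    proof
      assume w: "w = d z p"
      have "d z q \<le> d z p + d p q" using triangle p q zM by blast
      moreover have "d z q \<in> WS q" unfolding WS_def by blast
      ultimately show ?thesis using w by blast
    next
      assume "\<exists>n x y. w = W n x y p \<and> 1 \<le> n \<and> (\<forall>i<n. (x i, y i) \<in> A)"
      then obtain n x y where w: "w = W n x y p" and n: "1 \<le> n" and xy: "\<forall>i<n. (x i, y i) \<in> A"
        by blast
      have a: "x (n - 1) \<in> M" using xyM[OF xy, of "n - 1"] n by auto
      have "d (x (n - 1)) q \<le> d (x (n - 1)) p + d p q" using triangle a p q by blast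
      then have "W n x y q \<le> W n x y p + d p q" unfolding W_def by linarith
      then show ?thesis using memWS[OF n xy, of q] w by blast
    qed
  qed
  have gle: "g q \<le> g p + d p q" if p: "p \<in> M" and q: "q \<in> M" for p q
  proof -
    have "g q - d p q \<le> g p" unfolding g_def[of p]
    proof (rule cInf_greatest[OF ne])
      fix w assume "w \<in> WS p"
      then obtain w' where w': "w' \<in> WS q" "w' \<le> w + d p q" using lipstep p q by blast
      have "g q \<le> w'" unfolding g_def using w'(1) bb[OF q] by (rule cInf_lower)
      then show "g q - d p q \<le> w" using w' by linarith
    qed
    then show ?thesis by linarith
  qed
  have astep: "\<exists>w'\<in>WS a. w' \<le> w - \<gamma> * d a b" if ab: "(a, b) \<in> A" and w: "w \<in> WS b" for a b w
  proof -
    have aM: "a \<in> M" "b \<in> M" using inA ab by auto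
    from cases_WS[OF w] show ?thesis
    proof
      assume w: "w = d z b"
      have "W 1 (\<lambda>_. a) (\<lambda>_. b) a = d z b - \<gamma> * d a b" unfolding W_def using aM by simp
      moreover have "W 1 (\<lambda>_. a) (\<lambda>_. b) a \<in> WS a" by (rule memWS) (use ab in auto)
      ultimately show ?thesis using w by force
    next
      assume "\<exists>n x y. w = W n x y b \<and> 1 \<le> n \<and> (\<forall>i<n. (x i, y i) \<in> A)"
      then obtain n x y where w: "w = W n x y b" and n: "1 \<le> n" and xy: "\<forall>i<n. (x i, y i) \<in> A"
        by blast
      obtain m where m: "n = Suc m" using n by (cases n) auto
      define x' where "x' = x(n := a)"
      define y' where "y' = y(n := b)"
      have xy': "\<forall>i<Suc n. (x' i, y' i) \<in> A"
      proof (intro allI impI)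
        fix i assume "i < Suc n"
        then consider "i < n" | "i = n" by linarith
        then show "(x' i, y' i) \<in> A"
          by cases (use xy ab in \<open>auto simp: x'_def y'_def\<close>)
      qed
      have s1: "(\<Sum>i<Suc n. - (\<gamma> * d (x' i) (y' i))) = (\<Sum>i<n. - (\<gamma> * d (x i) (y i))) + - (\<gamma> * d a b)"
      proof -
        have "(\<Sum>i<Suc n. - (\<gamma> * d (x' i) (y' i))) = (\<Sum>i<n. - (\<gamma> * d (x' i) (y' i))) + - (\<gamma> * d (x' n) (y' n))"
          by (rule sum.lessThan_Suc)
        also have "(\<Sum>i<n. - (\<gamma> * d (x' i) (y' i))) = (\<Sum>i<n. - (\<gamma> * d (x i) (y i)))"
          by (intro sum.cong) (auto simp: x'_def y'_def)
        finally show ?thesis by (simp add: x'_def y'_def)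
      qed
      have s2: "(\<Sum>i<Suc n - 1. d (x' i) (y' (Suc i))) = (\<Sum>i<m. d (x i) (y (Suc i))) + d (x m) b"
      proof -
        have "(\<Sum>i<Suc n - 1. d (x' i) (y' (Suc i))) = (\<Sum>i<Suc m. d (x' i) (y' (Suc i)))"
          using m by simp
        also have "\<dots> = (\<Sum>i<m. d (x' i) (y' (Suc i))) + d (x' m) (y' (Suc m))"
          by (rule sum.lessThan_Suc)
        also have "(\<Sum>i<m. d (x' i) (y' (Suc i))) = (\<Sum>i<m. d (x i) (y (Suc i)))"
          by (intro sum.cong) (auto simp: x'_def y'_def m)
        also have "d (x' m) (y' (Suc m)) = d (x m) b" by (simp add: x'_def y'_def m)
        finally show ?thesis .
      qed
      have s3: "y' 0 = y 0" using m by (simp add: y'_def)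
      have s4: "d (x' (Suc n - 1)) a = 0" using aM by (simp add: x'_def)
      have "W (Suc n) x' y' a = d z (y 0) + (\<Sum>i<n. - (\<gamma> * d (x i) (y i))) + - (\<gamma> * d a b)
          + ((\<Sum>i<m. d (x i) (y (Suc i))) + d (x m) b)"
        unfolding W_def s1 s2 s3 s4 by simp
      moreover have "w = d z (y 0) + (\<Sum>i<n. - (\<gamma> * d (x i) (y i)))
          + (\<Sum>i<m. d (x i) (y (Suc i))) + d (x m) b"
        unfolding w W_def m by simp
      ultimately have "W (Suc n) x' y' a \<le> w - \<gamma> * d a b" by linarith
      moreover have "W (Suc n) x' y' a \<in> WS a" by (rule memWS) (use xy' in auto)
      ultimately show ?thesis by blast
    qed
  qed
  have gA: "g a \<le> g b - \<gamma> * d a b" if ab: "(a, b) \<in> A" for a b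
  proof -
    have aM: "a \<in> M" "b \<in> M" using inA ab by auto
    have "g a + \<gamma> * d a b \<le> g b" unfolding g_def[of b]
    proof (rule cInf_greatest[OF ne])
      fix w assume "w \<in> WS b"
      then obtain w' where w': "w' \<in> WS a" "w' \<le> w - \<gamma> * d a b" using astep ab by blast
      have "g a \<le> w'" unfolding g_def using w'(1) bb[OF aM(1)] by (rule cInf_lower)
      then show "g a + \<gamma> * d a b \<le> w" using w' by linarith
    qed
    then show ?thesis by linarith
  qed
  define f where "f p = g z - g p" for p
  have fb: "f \<in> lip0_ball M d z" unfolding lip0_ball_def
  proof (intro CollectI conjI ballI)
    show "f z = 0" unfolding f_def by simp
    fix x y assume x: "x \<in> M" and y: "y \<in> M"
    have "g y \<le> g x + d x y" using gle x y by blast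
    moreover have "g x \<le> g y + d y x" using gle x y by blast
    moreover have "d y x = d x y" by (rule commute)
    ultimately show "\<bar>f x - f y\<bar> \<le> d x y" unfolding f_def by linarith
  qed
  have "\<forall>(x, y)\<in>A. \<gamma> \<le> Phi d f (x, y)"
  proof (intro ballI, clarify)
    fix a b assume ab: "(a, b) \<in> A"
    have aM: "a \<in> M" "b \<in> M" "a \<noteq> b" using inA ab by auto
    have pos: "0 < d a b" using aM mdist_pos_less by blast
    have "\<gamma> * d a b \<le> f a - f b" using gA[OF ab] unfolding f_def by linarith
    then show "\<gamma> \<le> Phi d f (a, b)" unfolding Phi_def using pos by (simp add: le_divide_eq)
  qed
  then show ?thesis using fb by blast
qed



theorem corollary2p6:
  fixes M :: "'a set" and d :: "'a \<Rightarrow> 'a \<Rightarrow> real" and z :: 'a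
    and \<mu> :: "('a \<times> 'a) set \<Rightarrow> real"
  assumes "Metric_space M d" and "z \<in> M"
    and "positive_ba (Mtilde M) \<mu>"
  shows "(Phi_star_norm M d z \<mu> = \<mu> (Mtilde M)
           \<longleftrightarrow> (\<forall>\<gamma>. 0 < \<gamma> \<and> \<gamma> < 1 \<longrightarrow>
                 (\<exists>A f. A \<subseteq> Mtilde M \<and> f \<in> lip0_ball M d z \<and>
                        \<mu> A \<ge> \<gamma> * \<mu> (Mtilde M) \<and> (\<forall>(x, y)\<in>A. Phi d f (x, y) \<ge> \<gamma>))))
       \<and> (Phi_star_norm M d z \<mu> = \<mu> (Mtilde M)
           \<longleftrightarrow> (\<forall>\<gamma>. 0 < \<gamma> \<and> \<gamma> < 1 \<longrightarrow>
                 (\<exists>A. A \<subseteq> Mtilde M \<and> cyc_mono d \<gamma> A \<and> \<mu> A \<ge> \<gamma> * \<mu> (Mtilde M))))"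
proof -
  note ms = assms(1) and zM = assms(2) and p = assms(3)
  define T where "T = Mtilde M"
  define N where "N = Phi_star_norm M d z \<mu>"
  define I where "I f = fa_integral T \<mu> (Phi d f)" for f
  define Sn where "Sn = {\<bar>fa_integral (Mtilde M) \<mu> (Phi d f)\<bar> | f. f \<in> lip0_ball M d z}"
  have pT: "positive_ba T \<mu>" using p unfolding T_def .
  have Sne: "Sn \<noteq> {}" and Sbd: "bdd_above Sn" and Nle: "N \<le> \<mu> T" and NSup: "N = Sup Sn"
    using norm_props[OF ms p, where z=z] unfolding Sn_def N_def T_def by auto
  have Nge: "\<bar>I f\<bar> \<le> N" if "f \<in> lip0_ball M d z" for f
    using norm_props(4)[OF ms p that] unfolding I_def N_def T_def .
  have gb: "\<forall>q\<in>T. \<bar>Phi d f q\<bar> \<le> 1" if "f \<in> lip0_ball M d z" for f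
    using phi_bound[OF ms that] unfolding T_def by blast
  have mT0: "0 \<le> \<mu> T" using pb_nonneg[OF pT] by blast
  have N0: "0 \<le> N" using Nge[OF ball_zero[OF ms]] by linarith
  define P2 where "P2 = (\<forall>\<gamma>. 0 < \<gamma> \<and> \<gamma> < 1 \<longrightarrow>
                 (\<exists>A f. A \<subseteq> Mtilde M \<and> f \<in> lip0_ball M d z \<and>
                        \<mu> A \<ge> \<gamma> * \<mu> (Mtilde M) \<and> (\<forall>(x, y)\<in>A. Phi d f (x, y) \<ge> \<gamma>)))"
  define P3 where "P3 = (\<forall>\<gamma>. 0 < \<gamma> \<and> \<gamma> < 1 \<longrightarrow>
                 (\<exists>A. A \<subseteq> Mtilde M \<and> cyc_mono d \<gamma> A \<and> \<mu> A \<ge> \<gamma> * \<mu> (Mtilde M)))"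
  have i_ii: "P2" if NT: "N = \<mu> T"
    unfolding P2_def T_def[symmetric]
  proof (intro allI impI)
    fix \<gamma> :: real assume ga: "0 < \<gamma> \<and> \<gamma> < 1"
    show "\<exists>A f. A \<subseteq> T \<and> f \<in> lip0_ball M d z \<and> \<gamma> * \<mu> T \<le> \<mu> A \<and> (\<forall>(x, y)\<in>A. \<gamma> \<le> Phi d f (x, y))"
    proof (cases "\<mu> T = 0")
      case True
      have "{} \<subseteq> T" "(\<lambda>x. 0) \<in> lip0_ball M d z" "\<gamma> * \<mu> T \<le> \<mu> {}" "\<forall>(x, y)\<in>{}. \<gamma> \<le> Phi d (\<lambda>x. 0) (x, y)"
        using ball_zero[OF ms] pb_empty[OF pT] True by auto
      then show ?thesis by blast
    next
      case False
      then have mTp: "0 < \<mu> T" using mT0 by linarith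
      define c where "c = (1 - (1 - \<gamma>)^2) * \<mu> T"
      have "0 < (1 - \<gamma>)^2" using ga by simp
      then have "0 < (1 - \<gamma>)^2 * \<mu> T" using mTp by simp
      then have "c < Sup Sn" unfolding c_def NSup[symmetric] NT by (simp add: algebra_simps)
      then obtain s where "s \<in> Sn" "c < s" using less_cSup_iff[OF Sne Sbd] by blast
      then obtain f where f: "f \<in> lip0_ball M d z" and cI: "c < \<bar>I f\<bar>"
        unfolding Sn_def I_def T_def by blast
      have eq: "c - \<gamma> * \<mu> T = (1 - \<gamma>) * (\<gamma> * \<mu> T)"
        unfolding c_def by (simp add: power2_eq_square algebra_simps)
      have g1: "0 < 1 - \<gamma>" using ga by simp
      show ?thesis
      proof (cases "0 \<le> I f")
        case True
        define A where "A = {q\<in>T. \<gamma> \<le> Phi d f q}"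
        have "I f \<le> \<gamma> * \<mu> T + (1 - \<gamma>) * \<mu> A"
          unfolding I_def A_def using fa_upper_level[OF pT gb[OF f], of \<gamma>] ga by simp
        then have "(1 - \<gamma>) * (\<gamma> * \<mu> T) < (1 - \<gamma>) * \<mu> A" using cI True eq by linarith
        then have "\<gamma> * \<mu> T < \<mu> A" using g1 by (simp add: mult_less_cancel_left_pos)
        moreover have "A \<subseteq> T" "\<forall>(x, y)\<in>A. \<gamma> \<le> Phi d f (x, y)" unfolding A_def by auto
        ultimately show ?thesis using f by (intro exI[of _ A] exI[of _ f]) auto
      next
        case False
        define A where "A = {q\<in>T. Phi d f q \<le> - \<gamma>}"
        have AT: "A \<subseteq> T" unfolding A_def by auto
        have a1: "\<forall>q\<in>A. -1 \<le> Phi d f q" using gb[OF f] AT by fastforce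
        have b1: "\<forall>q\<in>T - A. - \<gamma> \<le> Phi d f q" unfolding A_def by auto
        have "-1 * \<mu> A + - \<gamma> * \<mu> (T - A) \<le> I f"
          unfolding I_def by (rule fa_lower_two[OF pT gb[OF f] AT a1 b1])
        moreover have "\<mu> (T - A) = \<mu> T - \<mu> A" by (rule pb_diff[OF pT AT])
        ultimately have "- \<mu> A - \<gamma> * \<mu> T + \<gamma> * \<mu> A \<le> I f" by (simp add: algebra_simps)
        then have "(1 - \<gamma>) * (\<gamma> * \<mu> T) < (1 - \<gamma>) * \<mu> A" using cI False eq
          by (simp add: algebra_simps)
        then have "\<gamma> * \<mu> T < \<mu> A" using g1 by (simp add: mult_less_cancel_left_pos)
        moreover have "\<forall>(x, y)\<in>A. \<gamma> \<le> Phi d (\<lambda>x. - f x) (x, y)"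
          unfolding A_def phi_neg by auto
        ultimately show ?thesis using ball_neg[OF f] AT by (intro exI[of _ A] exI[of _ "\<lambda>x. - f x"]) auto
      qed
    qed
  qed
  have ii_i: "N = \<mu> T" if H: "P2"
  proof (rule ccontr)
    assume "N \<noteq> \<mu> T"
    then have Nl: "N < \<mu> T" using Nle by linarith
    define \<delta> where "\<delta> = \<mu> T - N"
    have dp: "0 < \<delta>" "\<delta> \<le> \<mu> T" using Nl N0 unfolding \<delta>_def by auto
    have mTp: "0 < \<mu> T" using dp by linarith
    define e where "e = \<delta> / (4 * \<mu> T)"
    have e4: "4 * (e * \<mu> T) = \<delta>" unfolding e_def using mTp by (simp add: field_simps)
    have ep: "0 < e * \<mu> T" using e4 dp by linarith
    have e0: "0 < e" using ep mTp by (simp add: zero_less_mult_iff)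
    have e1: "e < 1"
    proof -
      have "e * \<mu> T < 1 * \<mu> T" using e4 dp mTp by linarith
      then show ?thesis using mTp by (simp only: mult_less_cancel_right)
    qed
    define \<gamma> where "\<gamma> = 1 - e"
    have ga: "0 < \<gamma> \<and> \<gamma> < 1" unfolding \<gamma>_def using e0 e1 by simp
    then obtain A f where AT: "A \<subseteq> T" and f: "f \<in> lip0_ball M d z" and mA: "\<gamma> * \<mu> T \<le> \<mu> A"
      and phA: "\<forall>(x, y)\<in>A. \<gamma> \<le> Phi d f (x, y)"
      using H unfolding P2_def T_def by blast
    have a1: "\<forall>q\<in>A. \<gamma> \<le> Phi d f q" using phA by auto
    have b1: "\<forall>q\<in>T - A. -1 \<le> Phi d f q" using gb[OF f] by fastforce
    have "\<gamma> * \<mu> A + -1 * \<mu> (T - A) \<le> I f"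
      unfolding I_def by (rule fa_lower_two[OF pT gb[OF f] AT a1 b1])
    moreover have "\<mu> (T - A) = \<mu> T - \<mu> A" by (rule pb_diff[OF pT AT])
    moreover have "I f \<le> N" using Nge[OF f] by linarith
    ultimately have k1: "(1 + \<gamma>) * \<mu> A - \<mu> T \<le> N" by (simp add: algebra_simps)
    have "(1 + \<gamma>) * (\<gamma> * \<mu> T) \<le> (1 + \<gamma>) * \<mu> A" using mA ga by (intro mult_left_mono) auto
    moreover have "(1 + \<gamma>) * (\<gamma> * \<mu> T) = 2 * \<mu> T - 3 * (e * \<mu> T) + e * (e * \<mu> T)"
      unfolding \<gamma>_def by (simp add: algebra_simps)
    moreover have "0 \<le> e * (e * \<mu> T)" using e0 ep by simp
    moreover have "N = \<mu> T - 4 * (e * \<mu> T)" using e4 unfolding \<delta>_def by linarith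
    ultimately show False using k1 ep by linarith
  qed
  have ii_iii: "P3" if H: "P2"
    unfolding P3_def
  proof (intro allI impI)
    fix \<gamma> :: real assume ga: "0 < \<gamma> \<and> \<gamma> < 1"
    then obtain A f where AT: "A \<subseteq> Mtilde M" and f: "f \<in> lip0_ball M d z" and mA: "\<gamma> * \<mu> (Mtilde M) \<le> \<mu> A"
      and phA: "\<forall>(x, y)\<in>A. \<gamma> \<le> Phi d f (x, y)"
      using H unfolding P2_def by blast
    have "cyc_mono d \<gamma> A" by (rule ii_to_cm[OF ms f AT phA])
    then show "\<exists>A. A \<subseteq> Mtilde M \<and> cyc_mono d \<gamma> A \<and> \<gamma> * \<mu> (Mtilde M) \<le> \<mu> A"
      using AT mA by blast
  qed
  have iii_ii: "P2" if H: "P3"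
    unfolding P2_def
  proof (intro allI impI)
    fix \<gamma> :: real assume ga: "0 < \<gamma> \<and> \<gamma> < 1"
    then obtain A where AT: "A \<subseteq> Mtilde M" and cmA: "cyc_mono d \<gamma> A" and mA: "\<gamma> * \<mu> (Mtilde M) \<le> \<mu> A"
      using H unfolding P3_def by blast
    obtain f where f: "f \<in> lip0_ball M d z" and phA: "\<forall>(x, y)\<in>A. \<gamma> \<le> Phi d f (x, y)"
      using cm_potential[OF ms zM AT cmA] by blast
    show "\<exists>A f. A \<subseteq> Mtilde M \<and> f \<in> lip0_ball M d z \<and> \<gamma> * \<mu> (Mtilde M) \<le> \<mu> A \<and> (\<forall>(x, y)\<in>A. \<gamma> \<le> Phi d f (x, y))"
      using AT f mA phA by blast
  qed
  have "(N = \<mu> T \<longleftrightarrow> P2) \<and> (N = \<mu> T \<longleftrightarrow> P3)"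
    using i_ii ii_i ii_iii iii_ii by blast
  then show ?thesis unfolding N_def T_def P2_def P3_def .
qed

end
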